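(* For every prime power $q$, the chromatic number $\chi$ of the Kneser graph of flags of type $\{2,3\}$ of $\mathrm{PG}(6,q)$ satisfies $\chi\le q^4+q^3+q^2+1$.
   Context: Dimensions are projective (planes 2, solids 3). A flag of type $\{2,3\}$ is a pair $(E,S)$ of a plane $E$ and a solid $S$ with $E\subseteq S$; the Kneser graph has these flags as vertices, distinct flags $(E,S),(E',S')$ being adjacent iff $E\cap S'=\emptyset$ and $E'\cap S=\emptyset$. The chromatic number is the least number of independent sets whose union is the whole vertex set. *)

theory Defs
  imports "HOL-Analysis.Analysis"
begin

text \<open>PG(6,q) is modelled as the lattice of subspaces of the 7-dimensional vector space
  F^7 over a finite field F with q elements. A projective subspace of projective dimension d
  is a vector subspace of (vector) dimension d+1.\<close>

definition pg_subspace :: "nat \<Rightarrow> ('a::field ^ 7) set \<Rightarrow> bool" where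
  "pg_subspace d U \<longleftrightarrow> vec.subspace U \<and> vec.dim U = d + 1"

definition flags23 :: "(('a::field ^ 7) set \<times> ('a ^ 7) set) set" where
  "flags23 = {(E, S). pg_subspace 2 E \<and> pg_subspace 3 S \<and> E \<subseteq> S}"

text \<open>Projective subspaces are disjoint iff the vector subspaces meet only in 0.\<close>
definition kneser_adj :: "(('a::field ^ 7) set \<times> ('a ^ 7) set) \<Rightarrow> (('a ^ 7) set \<times> ('a ^ 7) set) \<Rightarrow> bool" where
  "kneser_adj F F' \<longleftrightarrow> F \<noteq> F' \<and> fst F \<inter> snd F' = {0} \<and> fst F' \<inter> snd F = {0}"

definition independent_set :: "'v set \<Rightarrow> ('v \<Rightarrow> 'v \<Rightarrow> bool) \<Rightarrow> 'v set \<Rightarrow> bool" where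
  "independent_set V adj A \<longleftrightarrow> A \<subseteq> V \<and> (\<forall>x\<in>A. \<forall>y\<in>A. \<not> adj x y)"

definition chromatic_number :: "'v set \<Rightarrow> ('v \<Rightarrow> 'v \<Rightarrow> bool) \<Rightarrow> nat" where
  "chromatic_number V adj =
     (LEAST k. \<exists>C :: nat \<Rightarrow> 'v set. (\<forall>i<k. independent_set V adj (C i)) \<and> (\<Union>i<k. C i) = V)"

end

theory Submission
  imports Defs
begin

lemma exhaust_7:
  fixes x :: 7
  shows "x = 0 \<or> x = 1 \<or> x = 2 \<or> x = 3 \<or> x = 4 \<or> x = 5 \<or> x = 6"
proof (induct x)
  case (of_int z)
  then have "0 \<le> z" "z < 7" by simp_all
  then have "z = 0 \<or> z = 1 \<or> z = 2 \<or> z = 3 \<or> z = 4 \<or> z = 5 \<or> z = 6" by presburger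
  then show ?case by (elim disjE) simp_all
qed

lemma vec7_eq: "(x::'a^7) = y \<longleftrightarrow> x$0 = y$0 \<and> x$1 = y$1 \<and> x$2 = y$2 \<and> x$3 = y$3 \<and> x$4 = y$4 \<and> x$5 = y$5 \<and> x$6 = y$6"
proof
  assume H: "x$0 = y$0 \<and> x$1 = y$1 \<and> x$2 = y$2 \<and> x$3 = y$3 \<and> x$4 = y$4 \<and> x$5 = y$5 \<and> x$6 = y$6"
  show "x = y" unfolding vec_eq_iff
  proof
    fix i :: 7
    from exhaust_7[of i] H show "x$i = y$i" by (elim disjE) simp_all
  qed
qed simp


lemma dim_int7:
  fixes A B :: "('a::field^7) set"
  assumes "vec.subspace A" "vec.subspace B"
  shows "vec.dim A + vec.dim B \<le> vec.dim (A \<inter> B) + 7"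
proof -
  have "vec.dim {x + y |x y. x \<in> A \<and> y \<in> B} \<le> 7"
    using dim_subset_UNIV_cart_gen[of "{x + y |x y. x \<in> A \<and> y \<in> B}"] by simp
  then show ?thesis using vec.dim_sums_Int[OF assms] by linarith
qed

definition WW :: "('a::field^7) set" where "WW = {x. \<forall>i. i \<notin> {0,1,2,3,4} \<longrightarrow> x$i = 0}"
definition LL :: "('a::field^7) set" where "LL = {x. \<forall>i. i \<notin> {0,1} \<longrightarrow> x$i = 0}"

lemma dimWW: "vec.dim (WW::('a::field^7) set) = 5"
  unfolding WW_def dim_substandard_cart by simp
lemma dimLL: "vec.dim (LL::('a::field^7) set) = 2"
  unfolding LL_def dim_substandard_cart by simp
lemma WW_iff: "x \<in> WW \<longleftrightarrow> x$5 = 0 \<and> x$6 = 0"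
proof
  assume H: "x$5 = 0 \<and> x$6 = 0"
  have "x$i = 0" if "i \<notin> {0,1,2,3,4}" for i
    using exhaust_7[of i] H that by (elim disjE) simp_all
  then show "x \<in> WW" unfolding WW_def by blast
qed (simp add: WW_def)
lemma LL_iff: "x \<in> LL \<longleftrightarrow> x$2 = 0 \<and> x$3 = 0 \<and> x$4 = 0 \<and> x$5 = 0 \<and> x$6 = 0"
proof
  assume H: "x$2 = 0 \<and> x$3 = 0 \<and> x$4 = 0 \<and> x$5 = 0 \<and> x$6 = 0"
  have "x$i = 0" if "i \<notin> {0,1}" for i
    using exhaust_7[of i] H that by (elim disjE) simp_all
  then show "x \<in> LL" unfolding LL_def by blast
qed (simp add: LL_def)
lemma subWW: "vec.subspace (WW::('a::field^7) set)"
  unfolding vec.subspace_def WW_def by auto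
lemma subLL: "vec.subspace (LL::('a::field^7) set)"
  unfolding vec.subspace_def LL_def by auto

lemma dim0: "vec.dim ({0}::('a::field^7) set) = 0"
  by (metis vec.dim_empty vec.dim_span vec.span_empty)

definition NN :: "('a::field^7) set" where
  "NN = {Q. Q \<in> WW \<and> (Q$2 = 1 \<or> (Q$2 = 0 \<and> Q$3 = 1) \<or> (Q$2 = 0 \<and> Q$3 = 0 \<and> Q$4 = 1))}"

definition rr :: "'a::field^7 \<Rightarrow> 'a^7" where
  "rr Q = (Q$1) *s axis 0 1 + axis 1 1"

type_synonym 'a col = "('a\<times>'a\<times>'a\<times>'a) + ('a\<times>'a\<times>'a) + ('a\<times>'a) + unit"

definition enc :: "'a::field^7 \<Rightarrow> 'a col" where
  "enc Q = (if Q$2 \<noteq> 0 then Inl (Q$0,Q$1,Q$3,Q$4) else if Q$3 \<noteq> 0 then Inr (Inl (Q$0,Q$1,Q$4))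
     else Inr (Inr (Inl (Q$0,Q$1))))"

definition lastc :: "'a col" where "lastc = Inr (Inr (Inr ()))"

definition Cls :: "'a::field col \<Rightarrow> (('a^7) set \<times> ('a^7) set) set" where
  "Cls t = {F \<in> flags23. (\<exists>Q\<in>NN. enc Q = t \<and> Q \<in> snd F \<and> (Q \<in> fst F \<or> rr Q \<in> fst F))
      \<or> (t = lastc \<and> (axis 0 1 \<in> fst F \<or> (LL \<subseteq> snd F \<and> fst F \<inter> LL \<noteq> {0})))}"

lemma enc_inj: "Q \<in> NN \<Longrightarrow> Q' \<in> NN \<Longrightarrow> enc Q = enc Q' \<Longrightarrow> Q = Q'"
  unfolding NN_def enc_def WW_iff vec7_eq by (auto split: if_splits)

lemma enc_last: "enc Q \<noteq> lastc"
  unfolding enc_def lastc_def by auto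

lemma NN_nz: "Q \<in> NN \<Longrightarrow> Q \<noteq> 0"
  unfolding NN_def by auto

lemma rr_nz: "rr Q \<noteq> 0"
proof
  assume "rr Q = 0"
  then have "rr Q $ 1 = 0" by simp
  then show False unfolding rr_def by (simp add: axis_def)
qed

lemma ax0_LL: "axis 0 1 \<in> LL"
  unfolding LL_iff by (simp add: axis_def)

lemma ax0_nz: "axis 0 (1::'a::field) \<noteq> 0"
  by (simp add: axis_eq_0_iff)

lemma flags_sub: "(E,S) \<in> flags23 \<Longrightarrow> vec.subspace E \<and> vec.subspace S \<and> E \<subseteq> S \<and> vec.dim E = 3 \<and> vec.dim S = 4"
  unfolding flags23_def pg_subspace_def by auto

lemma not_adj: "(\<exists>x. x \<noteq> 0 \<and> x \<in> fst F \<inter> snd F') \<or> (\<exists>x. x \<noteq> 0 \<and> x \<in> fst F' \<inter> snd F) \<Longrightarrow> \<not> kneser_adj F F'"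
  unfolding kneser_adj_def by blast

lemma indep: fixes t :: "'a::field col" shows "independent_set flags23 kneser_adj (Cls t)"
  unfolding independent_set_def
proof (intro conjI ballI)
  show "Cls t \<subseteq> flags23" unfolding Cls_def by auto
next
  fix F F' assume F: "F \<in> Cls t" and F': "F' \<in> Cls t"
  obtain E S where FE: "F = (E,S)" by force
  obtain E' S' where FE': "F' = (E',S')" by force
  have fl: "E \<subseteq> S" "E' \<subseteq> S'" using F F' FE FE' flags_sub unfolding Cls_def by auto
  show "\<not> kneser_adj F F'"
  proof (cases "t = lastc")
    case True
    then have A: "axis 0 1 \<in> E \<or> (LL \<subseteq> S \<and> E \<inter> LL \<noteq> {0})"
      and B: "axis 0 1 \<in> E' \<or> (LL \<subseteq> S' \<and> E' \<inter> LL \<noteq> {0})"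
      using F F' FE FE' enc_last unfolding Cls_def by auto
    have z: "E \<inter> LL \<noteq> {0} \<Longrightarrow> vec.subspace E \<Longrightarrow> \<exists>x. x \<noteq> 0 \<and> x \<in> E \<inter> LL" for E :: "('a^7) set"
      using vec.subspace_0 subLL by blast
    have sE: "vec.subspace E" "vec.subspace E'" using F F' FE FE' flags_sub unfolding Cls_def by auto
    have nz: "axis 0 1 \<noteq> (0::'a^7)" by (rule ax0_nz)
    show ?thesis
    proof (rule not_adj)
      show "(\<exists>x. x \<noteq> 0 \<and> x \<in> fst F \<inter> snd F') \<or> (\<exists>x. x \<noteq> 0 \<and> x \<in> fst F' \<inter> snd F)"
      proof (cases "axis 0 1 \<in> E")
        case True
        then have "axis 0 1 \<in> S'" using B fl ax0_LL by blast
        then show ?thesis using True nz unfolding FE FE' fst_conv snd_conv by blast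
      next
        case False
        then have L: "LL \<subseteq> S" "E \<inter> LL \<noteq> {0}" using A by auto
        show ?thesis
        proof (cases "axis 0 1 \<in> E'")
          case True
          then show ?thesis using L nz ax0_LL unfolding FE FE' fst_conv snd_conv by blast
        next
          case False
          then have "LL \<subseteq> S'" using B by auto
          moreover obtain x where "x \<noteq> 0" "x \<in> E \<inter> LL" using z[OF L(2) sE(1)] by blast
          ultimately show ?thesis unfolding FE FE' fst_conv snd_conv by blast
        qed
      qed
    qed
  next
    case False
    then obtain Q Q' where Q: "Q \<in> NN" "enc Q = t" "Q \<in> S" "Q \<in> E \<or> rr Q \<in> E"
      and Q': "Q' \<in> NN" "enc Q' = t" "Q' \<in> S'" "Q' \<in> E' \<or> rr Q' \<in> E'"
      using F F' FE FE' unfolding Cls_def by auto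
    then have "Q' = Q" using enc_inj by metis
    then have Q'': "Q \<in> S'" "Q \<in> E' \<or> rr Q \<in> E'" using Q' by auto
    have nz: "Q \<noteq> 0" "rr Q \<noteq> 0" using NN_nz[OF Q(1)] rr_nz[of Q] by auto
    show ?thesis
    proof (rule not_adj)
      show "(\<exists>x. x \<noteq> 0 \<and> x \<in> fst F \<inter> snd F') \<or> (\<exists>x. x \<noteq> 0 \<and> x \<in> fst F' \<inter> snd F)"
      proof (cases "Q \<in> E")
        case True
        then show ?thesis using Q'' nz unfolding FE FE' fst_conv snd_conv by blast
      next
        case False
        then have r: "rr Q \<in> E" using Q by auto
        show ?thesis
        proof (cases "Q \<in> E'")
          case True
          then show ?thesis using Q nz unfolding FE FE' fst_conv snd_conv by blast
        next
          case False
          then have "rr Q \<in> S'" using Q'' fl by auto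
          then show ?thesis using r nz unfolding FE FE' fst_conv snd_conv by blast
        qed
      qed
    qed
  qed
qed

lemma normalize:
  fixes v :: "'a::field^7"
  assumes "v \<in> WW" "v \<notin> LL"
  shows "\<exists>c. c *s v \<in> NN"
proof -
  have v: "v$5 = 0" "v$6 = 0" "\<not> (v$2 = 0 \<and> v$3 = 0 \<and> v$4 = 0)" using assms WW_iff LL_iff by auto
  show ?thesis
  proof (cases "v$2 = 0")
    case False
    then show ?thesis using v by (intro exI[of _ "1 / v$2"]) (simp add: NN_def WW_iff)
  next
    case z2: True
    show ?thesis
    proof (cases "v$3 = 0")
      case False
      then show ?thesis using v z2 by (intro exI[of _ "1 / v$3"]) (simp add: NN_def WW_iff)
    next
      case True
      then show ?thesis using v z2 by (intro exI[of _ "1 / v$4"]) (simp add: NN_def WW_iff)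
    qed
  qed
qed

lemma cover:
  fixes F :: "('a::field^7) set \<times> ('a^7) set"
  assumes F: "F \<in> flags23"
  shows "\<exists>t. F \<in> Cls t"
proof -
  obtain E S where FE: "F = (E,S)" by force
  have fl: "vec.subspace E" "vec.subspace S" "E \<subseteq> S" "vec.dim E = 3" "vec.dim S = 4"
    using flags_sub[of E S] F unfolding FE by simp_all
  have "vec.dim E + vec.dim (WW::('a^7) set) \<le> vec.dim (E \<inter> WW) + 7" using dim_int7[OF fl(1) subWW] by simp
  then have "vec.dim (E \<inter> WW) \<noteq> 0" using fl(4) dimWW[where 'a='a] by linarith
  then have "E \<inter> WW \<noteq> {0}" using dim0 by metis
  moreover have "0 \<in> E \<inter> WW" by (rule vec.subspace_0[OF vec.subspace_inter[OF fl(1) subWW]])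
  ultimately obtain v where v: "v \<in> E" "v \<in> WW" "v \<noteq> 0" by blast
  show ?thesis
  proof (cases "\<exists>u \<in> E \<inter> WW. u \<notin> LL")
    case True
    then obtain u where u: "u \<in> E" "u \<in> WW" "u \<notin> LL" by blast
    then obtain c where c: "c *s u \<in> NN" using normalize by blast
    have "c *s u \<in> E" by (rule vec.subspace_scale[OF fl(1) u(1)])
    then have "F \<in> Cls (enc (c *s u))" using c F fl unfolding FE Cls_def by auto
    then show ?thesis by blast
  next
    case False
    then have vL: "v \<in> LL" using v by blast
    show ?thesis
    proof (cases "LL \<subseteq> S")
      case True
      then have "F \<in> Cls lastc" using v vL F unfolding FE Cls_def by auto
      then show ?thesis by blast
    next
      case notLS: False
      show ?thesis
      proof (cases "v$1 = 0")
        case True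
        then have "v$0 \<noteq> 0" using v vL by (auto simp: LL_iff vec7_eq)
        moreover have "axis 0 1 = (1 / v$0) *s v" using True vL \<open>v$0 \<noteq> 0\<close>
          by (auto simp: LL_iff vec7_eq axis_def)
        ultimately have "axis 0 1 \<in> E" using vec.subspace_scale[OF fl(1) v(1)] by metis
        then have "F \<in> Cls lastc" using F unfolding FE Cls_def by auto
        then show ?thesis by blast
      next
        case v1: False
        have "vec.dim S + vec.dim (WW::('a^7) set) \<le> vec.dim (S \<inter> WW) + 7" using dim_int7[OF fl(2) subWW] by simp
        then have dSW: "vec.dim (S \<inter> WW) \<ge> vec.dim (LL::('a^7) set)" using fl(5) dimWW[where 'a='a] dimLL[where 'a='a] by linarith
        have "\<not> S \<inter> WW \<subseteq> LL"
        proof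
          assume "S \<inter> WW \<subseteq> LL"
          then have "S \<inter> WW = LL"
            using vec.subspace_dim_equal[OF vec.subspace_inter[OF fl(2) subWW] subLL _ dSW] by blast
          then show False using notLS by blast
        qed
        then obtain w where w: "w \<in> S" "w \<in> WW" "w \<notin> LL" by blast
        then obtain c where c: "c *s w \<in> NN" using normalize by blast
        define w' where "w' = c *s w"
        have w'S: "w' \<in> S" unfolding w'_def by (rule vec.subspace_scale[OF fl(2) w(1)])
        define v' where "v' = (1 / v$1) *s v"
        have v'E: "v' \<in> E" unfolding v'_def by (rule vec.subspace_scale[OF fl(1) v(1)])
        define m where "m = v$0 / v$1"
        define Q where "Q = w' + (m - w'$1) *s v'"
        have QS: "Q \<in> S" unfolding Q_def by (rule vec.subspace_add[OF fl(2) w'S vec.subspace_scale[OF fl(2)]]) (use v'E fl(3) in blast)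
        have v'c: "v'$0 = m" "v'$1 = 1" "v'$2 = 0" "v'$3 = 0" "v'$4 = 0" "v'$5 = 0" "v'$6 = 0"
          using vL v1 unfolding v'_def m_def by (auto simp: LL_iff)
        have QN: "Q \<in> NN" using c v'c unfolding Q_def w'_def[symmetric] by (simp add: NN_def WW_iff)
        have Q1: "Q$1 = m" using v'c unfolding Q_def by simp
        have "rr Q = v'" using v'c Q1 unfolding rr_def vec7_eq by (simp add: axis_def)
        then have "F \<in> Cls (enc Q)" using QN QS v'E F unfolding FE Cls_def by auto
        then show ?thesis by blast
      qed
    qed
  qed
qed

lemma cardp: "CARD('b::finite \<times> 'c::finite) = CARD('b) * CARD('c)"
    by (metis UNIV_Times_UNIV card_cartesian_product)

lemma card_col: "CARD('a::{field,finite} col) = CARD('a) ^ 4 + CARD('a) ^ 3 + CARD('a) ^ 2 + 1"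
proof -
  note p = cardp
  show ?thesis by (simp add: card_UNIV_sum p power_numeral_reduce)
qed

theorem proposition7p2:
  fixes q :: nat
  assumes "q = CARD('a::{field, finite})"
  shows "chromatic_number (flags23 :: (('a ^ 7) set \<times> ('a ^ 7) set) set) kneser_adj
           \<le> q ^ 4 + q ^ 3 + q ^ 2 + 1"
proof -
  define n where "n = CARD('a col)"
  have n: "n = q ^ 4 + q ^ 3 + q ^ 2 + 1" using card_col assms n_def by simp
  obtain h :: "nat \<Rightarrow> 'a col" where h: "bij_betw h {0..<n} UNIV"
    using ex_bij_betw_nat_finite[of "UNIV :: 'a col set"] n_def by auto
  have "\<exists>C :: nat \<Rightarrow> (('a ^ 7) set \<times> ('a ^ 7) set) set.
          (\<forall>i<n. independent_set flags23 kneser_adj (C i)) \<and> (\<Union>i<n. C i) = flags23"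
  proof (intro exI conjI)
    show "\<forall>i<n. independent_set flags23 kneser_adj (Cls (h i))" using indep by blast
    show "(\<Union>i<n. Cls (h i)) = flags23"
    proof
      show "(\<Union>i<n. Cls (h i)) \<subseteq> flags23" unfolding Cls_def by auto
      show "flags23 \<subseteq> (\<Union>i<n. Cls (h i))"
      proof
        fix F :: "('a ^ 7) set \<times> ('a ^ 7) set" assume "F \<in> flags23"
        then obtain t where t: "F \<in> Cls t" using cover by blast
        obtain i where "i \<in> {0..<n}" "h i = t" using h unfolding bij_betw_def by (metis UNIV_I imageE)
        then show "F \<in> (\<Union>i<n. Cls (h i))" using t by auto
      qed
    qed
  qed
  then have "chromatic_number (flags23 :: (('a ^ 7) set \<times> ('a ^ 7) set) set) kneser_adj \<le> n"
    unfolding chromatic_number_def by (rule Least_le)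
  then show ?thesis using n by simp
qed
end
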